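(* Let $L$ be an oriented, ordered virtual link diagram with components $L_1,\dots,L_n$ and affine bilabeling $C$. Let $C'$ be another affine bilabeling in which some or all components have a different starting point, with the same starting bilabels. For component $i$ write $A_i=a^{(i)}_1+a^{(i)}_2$ and let $n_i$ be its weight. Track the classical crossings passed in going along $L_i$ from its starting point in $C$ to its starting point in $C'$: - let $O_i$ be the set of passages where $L_i$ is the overstrand; - let $U_i$ be the set of passages where $L_i$ is the understrand; - let $I_i$ be the total index change of $L_i$ along this path. Write $p_{(L,C)}=\sum_d\operatorname{sgn}(d)\,t_{o(d)}^{W_C(d)}-\mathrm{writhe}(L)$. Then $p_{(L,C')}$ is obtained from $p_{(L,C)}$ by: - replacing $A_i$ with $A_i-I_i$ for every $i$; and - multiplying the monomial of the crossing involved by $t_i^{\,n_i}$ for each passage in $O_i$, and by $t_j^{-n_i}$ for each passage in $U_i$, where $j$ is the other component involved in that crossing (possibly $j=i$).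
   Context: **Diagrams.** A virtual link diagram is an oriented planar diagram of ordered closed curves $L_1,\dots,L_n$ (components) with classical and virtual crossings. **Crossing conventions.** Draw a classical crossing with both strands oriented upward. - The bottom-left-to-top-right strand has index change $-1$; the bottom-right-to-top-left strand has index change $+1$. - The crossing is positive ($\operatorname{sgn}=+1$) if the overstrand is the bottom-left-to-top-right strand, and negative otherwise. - Self-crossings have both strands on one component; external crossings have strands on different components. - The weight $n_i$ of $L_i$ is the sum of the index changes of $L_i$ over its passages through external classical crossings. **Affine bilabeling.** - Each component $L_k$ gets a starting point with bilabel $(a^{(k)}_1,a^{(k)}_2)$ of formal integer variables, distinct for different components. - The bilabel is carried along the component in its orientation and is unchanged at virtual crossings. - At a classical crossing with index change $\varepsilon$, the first entry changes by $\varepsilon$ at a self-crossing, and the second entry changes by $\varepsilon$ at an external crossing. - The discrepancy $n_k$ (in the second entry) on returning is placed at the starting point. **Weights and polynomial.** Let $|(x,y)|=x+y$. With both strands drawn upward: - if $c$ is positive, $W(c)=|\text{bottom-left}|-|\text{top-left}|$; - if $c$ is negative, $W(c)=|\text{bottom-right}|-|\text{top-right}|$. The multi-variable affine index polynomial is $p_{(L,C)}=\sum_c\operatorname{sgn}(c)(t_{o(c)}^{W(c)}-1)$ over classical crossings, where $o(c)$ is the component of the overstrand. *)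

theory Defs
  imports Main
begin

text \<open>Only classical crossings matter (virtual crossings do not change labels).
  Components are numbered 0..<n.  Component k is described by the cyclic
  sequence of its passages through classical crossings, read along the
  orientation from a fixed reference point: a passage is (d, b) with d a crossing
  and b = True iff the component is the overstrand there.\<close>

type_synonym 'c passage = "'c \<times> bool"

record 'c vdiag =
  ncomp :: nat
  gauss :: "nat \<Rightarrow> 'c passage list"
  crossings :: "'c set"
  csgn :: "'c \<Rightarrow> int"

definition wf_diag :: "'c vdiag \<Rightarrow> bool" where
  "wf_diag D \<longleftrightarrow> finite (crossings D)
     \<and> (\<forall>d\<in>crossings D. csgn D d = 1 \<or> csgn D d = -1)
     \<and> (\<forall>k<ncomp D. distinct (gauss D k) \<and> fst ` set (gauss D k) \<subseteq> crossings D)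
     \<and> (\<forall>d\<in>crossings D. \<forall>b. \<exists>!k. k < ncomp D \<and> (d, b) \<in> set (gauss D k))"

definition comp_of :: "'c vdiag \<Rightarrow> 'c passage \<Rightarrow> nat" where
  "comp_of D p = (THE k. k < ncomp D \<and> p \<in> set (gauss D k))"

definition over_comp :: "'c vdiag \<Rightarrow> 'c \<Rightarrow> nat" where
  "over_comp D d = comp_of D (d, True)"

definition under_comp :: "'c vdiag \<Rightarrow> 'c \<Rightarrow> nat" where
  "under_comp D d = comp_of D (d, False)"

definition self_crossing :: "'c vdiag \<Rightarrow> 'c \<Rightarrow> bool" where
  "self_crossing D d \<longleftrightarrow> over_comp D d = under_comp D d"

text \<open>With both strands upward, the overstrand of a
  positive crossing is bottom-left-to-top-right (index change -1), the overstrand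
  of a negative crossing is bottom-right-to-top-left (index change +1); hence
  the overstrand has index change -sgn and the understrand +sgn.\<close>
definition idx :: "'c vdiag \<Rightarrow> 'c passage \<Rightarrow> int" where
  "idx D p = (if snd p then - csgn D (fst p) else csgn D (fst p))"

definition weight :: "'c vdiag \<Rightarrow> nat \<Rightarrow> int" where
  "weight D k = (\<Sum>p\<leftarrow>gauss D k. if self_crossing D (fst p) then 0 else idx D p)"

definition writhe :: "'c vdiag \<Rightarrow> int" where
  "writhe D = (\<Sum>d\<in>crossings D. csgn D d)"

text \<open>A choice of starting points is s :: nat => nat: the starting point of component k
  lies just before passage number (s k mod length) of gauss D k.\<close>
definition rot :: "'c vdiag \<Rightarrow> (nat \<Rightarrow> nat) \<Rightarrow> nat \<Rightarrow> 'c passage list" where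
  "rot D s k = rotate (s k) (gauss D k)"

definition pos :: "'c vdiag \<Rightarrow> (nat \<Rightarrow> nat) \<Rightarrow> 'c passage \<Rightarrow> nat" where
  "pos D s p = (THE j. j < length (rot D s (comp_of D p)) \<and> rot D s (comp_of D p) ! j = p)"

text \<open>Formal affine expressions in the variables A_k = a_1^(k) + a_2^(k):
  a pair (c, c0) stands for  sum_k c k * A_k + c0.\<close>
type_synonym lin = "(nat \<Rightarrow> int) \<times> int"

definition lin_zero :: lin where "lin_zero = ((\<lambda>_. 0), 0)"
definition lin_add :: "lin \<Rightarrow> lin \<Rightarrow> lin" where
  "lin_add x y = ((\<lambda>k. fst x k + fst y k), snd x + snd y)"
definition lin_diff :: "lin \<Rightarrow> lin \<Rightarrow> lin" where
  "lin_diff x y = ((\<lambda>k. fst x k - fst y k), snd x - snd y)"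
definition lin_const :: "int \<Rightarrow> lin" where
  "lin_const c = ((\<lambda>_. 0), c)"
definition lin_var :: "nat \<Rightarrow> lin" where
  "lin_var k = ((\<lambda>m. if m = k then 1 else 0), 0)"

text \<open>Bilabel on component k after passing the first j passages from the starting point:
  (a_1^(k) + (index changes at self-crossings), a_2^(k) + (index changes at external
  crossings)).  We record the two integer offsets; |(x,y)| = x + y is then
  A_k + both offsets.\<close>
definition label_offsets :: "'c vdiag \<Rightarrow> (nat \<Rightarrow> nat) \<Rightarrow> nat \<Rightarrow> nat \<Rightarrow> int \<times> int" where
  "label_offsets D s k j =
     ((\<Sum>p\<leftarrow>take j (rot D s k). if self_crossing D (fst p) then idx D p else 0),
      (\<Sum>p\<leftarrow>take j (rot D s k). if self_crossing D (fst p) then 0 else idx D p))"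

definition label_norm :: "'c vdiag \<Rightarrow> (nat \<Rightarrow> nat) \<Rightarrow> nat \<Rightarrow> nat \<Rightarrow> lin" where
  "label_norm D s k j = lin_add (lin_var k)
      (lin_const (fst (label_offsets D s k j) + snd (label_offsets D s k j)))"

text \<open>W(c): for both signs this is |incoming overstrand arc| - |outgoing understrand arc|
  (bottom-left/top-left for positive, bottom-right/top-right for negative).\<close>
definition Wt :: "'c vdiag \<Rightarrow> (nat \<Rightarrow> nat) \<Rightarrow> 'c \<Rightarrow> lin" where
  "Wt D s d = lin_diff
      (label_norm D s (over_comp D d) (pos D s (d, True)))
      (label_norm D s (under_comp D d) (Suc (pos D s (d, False))))"

text \<open>A monomial assigns to each t_i an exponent; a polynomial is an integer
  coefficient function on monomials (finitely supported).\<close>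
type_synonym mono = "nat \<Rightarrow> lin"
type_synonym vpoly = "mono \<Rightarrow> int"

definition mono_t :: "nat \<Rightarrow> lin \<Rightarrow> mono" where
  "mono_t i e = (\<lambda>j. if j = i then e else lin_zero)"

definition mono_one :: mono where "mono_one = (\<lambda>_. lin_zero)"

definition poly_of :: "'c vdiag \<Rightarrow> ('c \<Rightarrow> lin) \<Rightarrow> vpoly" where
  "poly_of D E = (\<lambda>m. (\<Sum>d\<in>crossings D. if mono_t (over_comp D d) (E d) = m then csgn D d else 0)
                      - (if m = mono_one then writhe D else 0))"

definition aip :: "'c vdiag \<Rightarrow> (nat \<Rightarrow> nat) \<Rightarrow> vpoly" where
  "aip D s = poly_of D (Wt D s)"

text \<open>Passages of L_k met going from its starting point in s to its starting point in s'.\<close>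
definition path :: "'c vdiag \<Rightarrow> (nat \<Rightarrow> nat) \<Rightarrow> (nat \<Rightarrow> nat) \<Rightarrow> nat \<Rightarrow> 'c passage list" where
  "path D s s' k = take (nat ((int (s' k) - int (s k)) mod int (length (gauss D k)))) (rot D s k)"

definition in_path :: "'c vdiag \<Rightarrow> (nat \<Rightarrow> nat) \<Rightarrow> (nat \<Rightarrow> nat) \<Rightarrow> 'c passage \<Rightarrow> bool" where
  "in_path D s s' p \<longleftrightarrow> p \<in> set (path D s s' (comp_of D p))"

definition Ich :: "'c vdiag \<Rightarrow> (nat \<Rightarrow> nat) \<Rightarrow> (nat \<Rightarrow> nat) \<Rightarrow> nat \<Rightarrow> int" where
  "Ich D s s' k = (\<Sum>p\<leftarrow>path D s s' k. idx D p)"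

text \<open>Substitution A_i := A_i - I_i for every component i.\<close>
definition subst_A :: "'c vdiag \<Rightarrow> (nat \<Rightarrow> nat) \<Rightarrow> (nat \<Rightarrow> nat) \<Rightarrow> lin \<Rightarrow> lin" where
  "subst_A D s s' e = (fst e, snd e - (\<Sum>i<ncomp D. fst e i * Ich D s s' i))"

definition corr :: "'c vdiag \<Rightarrow> (nat \<Rightarrow> nat) \<Rightarrow> (nat \<Rightarrow> nat) \<Rightarrow> 'c \<Rightarrow> int" where
  "corr D s s' d =
     (if in_path D s s' (d, True) then weight D (over_comp D d) else 0)
   - (if in_path D s s' (d, False) then weight D (under_comp D d) else 0)"

end

theory Submission
  imports Defs
begin

lemma rot_shift:
  fixes r :: "'a list" and f :: "'a \<Rightarrow> int"
  assumes "j < length r" "m < length r"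
  shows "\<exists>j'. j' < length r \<and> rotate m r ! j' = r ! j \<and>
     sum_list (map f (take j' (rotate m r))) = sum_list (map f (take j r)) - sum_list (map f (take m r)) + (if j < m then sum_list (map f r) else 0) \<and>
     sum_list (map f (take (Suc j') (rotate m r))) = sum_list (map f (take (Suc j) r)) - sum_list (map f (take m r)) + (if j < m then sum_list (map f r) else 0)"
proof -
  have rm: "rotate m r = drop m r @ take m r" using assms by (simp add: rotate_drop_take)
  have tot: "sum_list (map f r) = sum_list (map f (take m r)) + sum_list (map f (drop m r))"
    by (metis append_take_drop_id map_append sum_list_append)
  show ?thesis
  proof (cases "j < m")
    case True
    let ?j = "length r - m + j"
    have "?j < length r" using True assms by simp
    moreover have "rotate m r ! ?j = r ! j"
    proof -
      have "rotate m r ! ?j = (drop m r @ take m r) ! (length (drop m r) + j)" using rm by simp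
      also have "\<dots> = take m r ! j" by (rule nth_append_length_plus)
      finally show ?thesis using True by simp
    qed
    moreover have "take ?j (rotate m r) = drop m r @ take j r" using True assms
      by (simp add: rm take_append min_def)
    moreover have "take (Suc ?j) (rotate m r) = drop m r @ take (Suc j) r" using True assms
      by (simp add: rm take_append min_def Suc_diff_le)
    ultimately show ?thesis using True tot by (intro exI[of _ ?j]) auto
  next
    case False
    let ?j = "j - m"
    have a: "take j r = take m r @ drop m (take j r)" using False
      by (metis append_take_drop_id min.absorb1 not_less take_take)
    have b: "take (Suc j) r = take m r @ drop m (take (Suc j) r)" using False
      by (metis append_take_drop_id min.absorb1 not_less take_take le_SucI)
    have "?j < length r" using False assms by simp
    moreover have "rotate m r ! ?j = r ! j" using False assms by (auto simp add: rm nth_append)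
    moreover have "take ?j (rotate m r) = drop m (take j r)" using False assms
      by (simp add: rm take_append take_drop)
    moreover have "take (Suc ?j) (rotate m r) = drop m (take (Suc j) r)" using False assms
      by (simp add: rm take_append take_drop Suc_diff_le)
    ultimately show ?thesis using False
      by (intro exI[of _ ?j]) (simp, metis a b map_append sum_list_append add_diff_cancel_left')
  qed
qed

lemma comp_of_eq:
  assumes wf: "wf_diag D" and k: "k < ncomp D" and p: "p \<in> set (gauss D k)"
  shows "comp_of D p = k"
proof -
  obtain d b where pd: "p = (d, b)" by (cases p)
  have u: "\<forall>d\<in>crossings D. \<forall>b. \<exists>!k. k < ncomp D \<and> (d, b) \<in> set (gauss D k)"
    using wf unfolding wf_diag_def by (elim conjE)
  have "fst ` set (gauss D k) \<subseteq> crossings D" using wf k unfolding wf_diag_def by auto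
  then have "d \<in> crossings D" using p pd by force
  then have "\<exists>!k. k < ncomp D \<and> p \<in> set (gauss D k)" using u pd by simp
  then show ?thesis unfolding comp_of_def using k p by (metis (mono_tags, lifting) the1_equality)
qed

lemma comp_of_mem:
  assumes wf: "wf_diag D" and d: "d \<in> crossings D"
  shows "comp_of D (d,b) < ncomp D \<and> (d,b) \<in> set (gauss D (comp_of D (d,b)))"
proof -
  have u: "\<forall>d\<in>crossings D. \<forall>b. \<exists>!k. k < ncomp D \<and> (d, b) \<in> set (gauss D k)"
    using wf unfolding wf_diag_def by (elim conjE)
  have "\<exists>!k. k < ncomp D \<and> (d,b) \<in> set (gauss D k)" using u d by simp
  then show ?thesis unfolding comp_of_def by (rule theI')
qed

lemma sum_split_if:
  "sum_list (map (\<lambda>p. if c p then (g p::int) else 0) xs) + sum_list (map (\<lambda>p. if c p then 0 else g p) xs)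
   = sum_list (map g xs)"
  by (induction xs) auto

lemma total_idx:
  assumes wf: "wf_diag D" and k: "k < ncomp D"
  shows "sum_list (map (idx D) (gauss D k)) = weight D k"
proof -
  let ?g = "gauss D k"
  have dist: "distinct ?g" using wf k unfolding wf_diag_def by blast
  let ?X = "{p \<in> set ?g. self_crossing D (fst p)}"
  define \<sigma> where "\<sigma> = (\<lambda>p::'a passage. (fst p, \<not> snd p))"
  have inj: "inj \<sigma>" unfolding \<sigma>_def inj_def by auto
  have cl: "\<sigma> p \<in> ?X" if "p \<in> ?X" for p
  proof -
    obtain d b where pd: "p = (d,b)" by (cases p)
    have m: "(d,b) \<in> set ?g" and sc: "self_crossing D d" using that pd by auto
    have dc: "d \<in> crossings D" using wf k m unfolding wf_diag_def by force
    have c1: "comp_of D (d,b) = k" using comp_of_eq[OF wf k m] .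
    have "comp_of D (d, \<not> b) = comp_of D (d,b)" using sc
      unfolding self_crossing_def over_comp_def under_comp_def by (cases b) auto
    then have "(d, \<not> b) \<in> set ?g" using comp_of_mem[OF wf dc, of "\<not> b"] c1 by simp
    then show ?thesis using sc pd \<sigma>_def by simp
  qed
  have img: "\<sigma> ` ?X = ?X"
  proof
    show "\<sigma> ` ?X \<subseteq> ?X" using cl by (simp add: image_subset_iff)
    show "?X \<subseteq> \<sigma> ` ?X"
    proof
      fix p assume "p \<in> ?X"
      then have "\<sigma> p \<in> ?X" by (rule cl)
      moreover have "\<sigma> (\<sigma> p) = p" unfolding \<sigma>_def by simp
      ultimately show "p \<in> \<sigma> ` ?X" by (metis image_eqI)
    qed
  qed
  have neg: "idx D (\<sigma> p) = - idx D p" for p unfolding \<sigma>_def idx_def by simp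
  have "sum (idx D) ?X = sum (idx D \<circ> \<sigma>) ?X"
    using sum.reindex[of \<sigma> ?X "idx D"] inj img by (simp add: inj_on_subset)
  also have "\<dots> = - sum (idx D) ?X" by (simp add: neg sum_negf)
  finally have X0: "sum (idx D) ?X = 0" by simp
  have "sum_list (map (\<lambda>p. if self_crossing D (fst p) then idx D p else 0) ?g)
      = sum (\<lambda>p. if self_crossing D (fst p) then idx D p else 0) (set ?g)"
    using dist by (simp add: sum_list_distinct_conv_sum_set)
  also have "\<dots> = sum (idx D) ?X" by (rule sum.inter_filter[symmetric]) simp
  finally have "sum_list (map (\<lambda>p. if self_crossing D (fst p) then idx D p else 0) ?g) = 0"
    using X0 by simp
  then show ?thesis using sum_split_if[of "\<lambda>p. self_crossing D (fst p)" "idx D" ?g]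
    unfolding weight_def by simp
qed


lemma sum_rotate: "sum_list (map (f::'a\<Rightarrow>int) (rotate n xs)) = sum_list (map f xs)"
proof -
  have "sum_list (map f (rotate n xs)) = sum_list (map f (drop (n mod length xs) xs)) + sum_list (map f (take (n mod length xs) xs))"
    by (simp add: rotate_drop_take)
  also have "\<dots> = sum_list (map f xs)"
    by (metis add.commute append_take_drop_id map_append sum_list_append)
  finally show ?thesis .
qed

lemma the_pos:
  assumes "distinct xs" "i < length xs" "xs ! i = p"
  shows "(THE j. j < length xs \<and> xs ! j = p) = i"
  using assms by (auto intro!: the_equality simp: nth_eq_iff_index_eq)

lemma mod_rot:
  fixes a b L :: nat
  assumes "L > 0"
  shows "(nat ((int b - int a) mod int L) + a) mod L = b mod L"
proof -
  have "int ((nat ((int b - int a) mod int L) + a) mod L) = ((int b - int a) mod int L + int a) mod int L"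
    using assms by (simp add: zmod_int)
  also have "\<dots> = int b mod int L" by (simp add: mod_add_left_eq)
  also have "\<dots> = int (b mod L)" by (simp add: zmod_int)
  finally show ?thesis by simp
qed

lemma label_norm_eq:
  "label_norm D s k j = lin_add (lin_var k) (lin_const (sum_list (map (idx D) (take j (rot D s k)))))"
  unfolding label_norm_def label_offsets_def using sum_split_if[of "\<lambda>p. self_crossing D (fst p)" "idx D"] by simp

lemma shift:
  assumes wf: "wf_diag D" and k: "k < ncomp D" and p: "p \<in> set (gauss D k)"
  shows "sum_list (map (idx D) (take (pos D s' p) (rot D s' k))) =
           sum_list (map (idx D) (take (pos D s p) (rot D s k))) - Ich D s s' k
           + (if in_path D s s' p then weight D k else 0)"
    and "sum_list (map (idx D) (take (Suc (pos D s' p)) (rot D s' k))) =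
           sum_list (map (idx D) (take (Suc (pos D s p)) (rot D s k))) - Ich D s s' k
           + (if in_path D s s' p then weight D k else 0)"
proof -
  let ?g = "gauss D k"
  define L where "L = length ?g"
  define r where "r = rot D s k"
  define m where "m = nat ((int (s' k) - int (s k)) mod int L)"
  have dist: "distinct ?g" using wf k unfolding wf_diag_def by blast
  have L0: "L > 0" using p L_def by (cases ?g) auto
  have dr: "distinct r" and lr: "length r = L" using dist unfolding r_def L_def rot_def by auto
  have cp: "comp_of D p = k" by (rule comp_of_eq[OF wf k p])
  have "p \<in> set r" using p unfolding r_def rot_def by simp
  then obtain j where j: "j < L" "r ! j = p" using lr by (metis in_set_conv_nth)
  have posj: "pos D s p = j" unfolding pos_def cp r_def[symmetric] using the_pos[OF dr] j lr by simp
  have mL: "m < L" unfolding m_def using L0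
    by (metis (no_types) Euclidean_Rings.pos_mod_bound Euclidean_Rings.pos_mod_sign nat_less_iff of_nat_0_less_iff)
  have r': "rot D s' k = rotate m r"
    unfolding r_def rot_def rotate_rotate
    by (metis L_def L0 m_def mod_rot rotate_conv_mod)
  have tot: "sum_list (map (idx D) r) = weight D k" using total_idx[OF wf k] unfolding r_def rot_def sum_rotate by simp
  have Ich: "Ich D s s' k = sum_list (map (idx D) (take m r))"
    unfolding Ich_def path_def m_def r_def L_def by simp
  have inp: "in_path D s s' p \<longleftrightarrow> j < m"
  proof -
    have "in_path D s s' p \<longleftrightarrow> p \<in> set (take m r)"
      unfolding in_path_def cp path_def m_def r_def L_def by simp
    also have "\<dots> \<longleftrightarrow> j < m"
    proof
      assume "p \<in> set (take m r)"
      then obtain i where "i < m" "take m r ! i = p" using mL lr by (auto simp: in_set_conv_nth)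
      then have "i < m" "r ! i = p" by auto
      then show "j < m" using j dr mL lr nth_eq_iff_index_eq by (metis order.strict_trans)
    next
      assume "j < m" then show "p \<in> set (take m r)" using j mL lr
        by (metis in_set_conv_nth length_take min.absorb4 nth_take)
    qed
    finally show ?thesis .
  qed
  obtain j' where j': "j' < L" "rotate m r ! j' = r ! j"
     "sum_list (map (idx D) (take j' (rotate m r))) = sum_list (map (idx D) (take j r)) - sum_list (map (idx D) (take m r)) + (if j < m then sum_list (map (idx D) r) else 0)"
     "sum_list (map (idx D) (take (Suc j') (rotate m r))) = sum_list (map (idx D) (take (Suc j) r)) - sum_list (map (idx D) (take m r)) + (if j < m then sum_list (map (idx D) r) else 0)"
    using rot_shift[of j r m "idx D"] j mL lr by auto
  have posj': "pos D s' p = j'" unfolding pos_def cp r' using the_pos[of "rotate m r" j' p] j' j dr lr by simp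
  show "sum_list (map (idx D) (take (pos D s' p) (rot D s' k))) =
           sum_list (map (idx D) (take (pos D s p) (rot D s k))) - Ich D s s' k
           + (if in_path D s s' p then weight D k else 0)"
    using j' posj posj' r' Ich inp tot r_def by simp
  show "sum_list (map (idx D) (take (Suc (pos D s' p)) (rot D s' k))) =
           sum_list (map (idx D) (take (Suc (pos D s p)) (rot D s k))) - Ich D s s' k
           + (if in_path D s s' p then weight D k else 0)"
    using j' posj posj' r' Ich inp tot r_def by simp
qed


lemma poly_of_cong:
  assumes "\<And>d. d \<in> crossings D \<Longrightarrow> E1 d = E2 d"
  shows "poly_of D E1 = poly_of D E2"
  unfolding poly_of_def using assms by (intro ext) (simp cong: sum.cong)

theorem proposition8:
  fixes D :: "'c vdiag" and s s' :: "nat \<Rightarrow> nat"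
  assumes "wf_diag D"
  shows "aip D s' =
    poly_of D (\<lambda>d. lin_add (subst_A D s s' (Wt D s d)) (lin_const (corr D s s' d)))"
  unfolding aip_def
proof (rule poly_of_cong)
  fix d assume d: "d \<in> crossings D"
  define oc where "oc = over_comp D d"
  define uc where "uc = under_comp D d"
  have oc: "oc < ncomp D" "(d,True) \<in> set (gauss D oc)"
    using comp_of_mem[OF assms d, of True] unfolding oc_def over_comp_def by auto
  have uc: "uc < ncomp D" "(d,False) \<in> set (gauss D uc)"
    using comp_of_mem[OF assms d, of False] unfolding uc_def under_comp_def by auto
  note so = shift(1)[OF assms oc(1) oc(2), of s' s]
  note su = shift(2)[OF assms uc(1) uc(2), of s' s]
  have sumI: "(\<Sum>i<ncomp D. ((if i = oc then 1 else 0) + 0 - ((if i = uc then 1 else 0) + 0)) * Ich D s s' i)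
      = Ich D s s' oc - Ich D s s' uc"
  proof -
    have h: "(\<Sum>i<ncomp D. (if i = c then (1::int) else 0) * Ich D s s' i) = Ich D s s' c"
      if "c < ncomp D" for c
    proof -
      have "(\<Sum>i<ncomp D. (if i = c then (1::int) else 0) * Ich D s s' i)
          = (\<Sum>i<ncomp D. if i = c then Ich D s s' i else 0)" by (intro sum.cong) auto
      also have "\<dots> = Ich D s s' c" using that by (simp add: sum.delta)
      finally show ?thesis .
    qed
    have "(\<Sum>i<ncomp D. ((if i = oc then 1 else 0) + 0 - ((if i = uc then 1 else 0) + 0)) * Ich D s s' i)
      = (\<Sum>i<ncomp D. (if i = oc then (1::int) else 0) * Ich D s s' i)
        - (\<Sum>i<ncomp D. (if i = uc then (1::int) else 0) * Ich D s s' i)"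
      by (simp add: left_diff_distrib sum_subtractf)
    then show ?thesis using h oc(1) uc(1) by simp
  qed
  show "Wt D s' d = lin_add (subst_A D s s' (Wt D s d)) (lin_const (corr D s s' d))"
    unfolding Wt_def label_norm_eq oc_def[symmetric] uc_def[symmetric] so su
    unfolding lin_add_def lin_diff_def lin_const_def lin_var_def subst_A_def corr_def
      oc_def[symmetric] uc_def[symmetric]
    using sumI by (simp add: fun_eq_iff)
qed

end
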